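(* Let $A$ be a simply laced hyperbolic generalized Cartan matrix with node set $I$, $n=|I|-1$. Let $\phi$ be any facet of the projectivized Weyl chamber $PC$ and $p$ any point of $\phi$. Then there is a facet $\phi'$ of $PC$ making dihedral angle $\pi/3$ with $\phi$ such that the hyperbolic distance $d(p,\phi\cap\phi')\leq\cosh^{-1}\sqrt{4/3}$.
   Context: $A=(a_{ij})_{i,j\in I}$ is simply laced ($a_{ii}=2$, $a_{ij}\in\{0,-1\}$ for $i\ne j$) and hyperbolic (connected Dynkin diagram, not of finite or affine type, every proper connected subdiagram of finite or affine type). Let $\Lambda=\bigoplus_i\mathbb{Z}\alpha_i$ with symmetric form $\alpha_i\cdot\alpha_j=a_{ij}$; then $\Lambda\otimes\mathbb{R}$ has signature $(n,1)$. The fundamental chamber is $C=\{x\in\Lambda\otimes\mathbb{R}: x\cdot\alpha_i\le0\text{ for all }i\}$; the vectors of negative norm form two components, and the future cone $F$ is the one that $C$ meets. Its projectivization $PF$ is hyperbolic $n$-space $H^n$, with distance between points represented by $x,y\in F$ given by $\cosh^{-1}\sqrt{(x\cdot y)^2/(x^2y^2)}$. $C$ lies in the closure $\overline F$, and its projectivization $PC$ is a hyperbolic simplex (together with its ideal vertices) in $\overline{H^n}$, whose facets are $\phi_i=PC\cap P(\alpha_i^\perp)$, $i\in I$; facets $\phi_i,\phi_j$ ($i\ne j$) meet at angle $\pi/3$ exactly when $a_{ij}=-1$ and at angle $\pi/2$ when $a_{ij}=0$. *)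

theory Defs
  imports Complex_Main
begin

text \<open>Vectors of the real span of the simple roots are functions 'i => real
  (coordinates w.r.t. the basis alpha_i).\<close>

definition simply_laced :: "('i \<Rightarrow> 'i \<Rightarrow> int) \<Rightarrow> bool" where
  "simply_laced A \<longleftrightarrow> (\<forall>i. A i i = 2) \<and> (\<forall>i j. i \<noteq> j \<longrightarrow> A i j \<in> {0, -1}) \<and> (\<forall>i j. A i j = A j i)"

definition dynkin_edge :: "('i \<Rightarrow> 'i \<Rightarrow> int) \<Rightarrow> 'i \<Rightarrow> 'i \<Rightarrow> bool" where
  "dynkin_edge A i j \<longleftrightarrow> i \<noteq> j \<and> A i j \<noteq> 0"

definition connected_sub :: "('i \<Rightarrow> 'i \<Rightarrow> int) \<Rightarrow> 'i set \<Rightarrow> bool" where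
  "connected_sub A J \<longleftrightarrow> J \<noteq> {} \<and>
     (\<forall>i\<in>J. \<forall>j\<in>J. (i, j) \<in> {(k, l). k \<in> J \<and> l \<in> J \<and> dynkin_edge A k l}\<^sup>*)"

text \<open>Kac's classification of an indecomposable GCM (restricted to J):
  finite type iff there is u > 0 with A u > 0; affine type iff there is u > 0 with A u = 0.\<close>
definition finite_type :: "('i \<Rightarrow> 'i \<Rightarrow> int) \<Rightarrow> 'i set \<Rightarrow> bool" where
  "finite_type A J \<longleftrightarrow> (\<exists>u :: 'i \<Rightarrow> real. (\<forall>i\<in>J. u i > 0) \<and>
      (\<forall>i\<in>J. (\<Sum>j\<in>J. real_of_int (A i j) * u j) > 0))"

definition affine_type :: "('i \<Rightarrow> 'i \<Rightarrow> int) \<Rightarrow> 'i set \<Rightarrow> bool" where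
  "affine_type A J \<longleftrightarrow> (\<exists>u :: 'i \<Rightarrow> real. (\<forall>i\<in>J. u i > 0) \<and>
      (\<forall>i\<in>J. (\<Sum>j\<in>J. real_of_int (A i j) * u j) = 0))"

definition hyperbolic :: "('i::finite \<Rightarrow> 'i \<Rightarrow> int) \<Rightarrow> bool" where
  "hyperbolic A \<longleftrightarrow> connected_sub A UNIV \<and> \<not> finite_type A UNIV \<and> \<not> affine_type A UNIV \<and>
     (\<forall>J. J \<subset> UNIV \<longrightarrow> connected_sub A J \<longrightarrow> finite_type A J \<or> affine_type A J)"

definition bform :: "('i::finite \<Rightarrow> 'i \<Rightarrow> int) \<Rightarrow> ('i \<Rightarrow> real) \<Rightarrow> ('i \<Rightarrow> real) \<Rightarrow> real" where
  "bform A x y = (\<Sum>i\<in>UNIV. \<Sum>j\<in>UNIV. x i * real_of_int (A i j) * y j)"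

definition simple_root :: "'i \<Rightarrow> ('i \<Rightarrow> real)" where
  "simple_root i = (\<lambda>j. if j = i then 1 else 0)"

definition chamber :: "('i::finite \<Rightarrow> 'i \<Rightarrow> int) \<Rightarrow> ('i \<Rightarrow> real) set" where
  "chamber A = {x. \<forall>i. bform A x (simple_root i) \<le> 0}"

text \<open>Representatives in C of the (non-ideal) points of H^n lying in the facet phi_i of PC.\<close>
definition facet_pts :: "('i::finite \<Rightarrow> 'i \<Rightarrow> int) \<Rightarrow> 'i \<Rightarrow> ('i \<Rightarrow> real) set" where
  "facet_pts A i = {x \<in> chamber A. bform A x x < 0 \<and> bform A x (simple_root i) = 0}"

definition hdist :: "('i::finite \<Rightarrow> 'i \<Rightarrow> int) \<Rightarrow> ('i \<Rightarrow> real) \<Rightarrow> ('i \<Rightarrow> real) \<Rightarrow> real" where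
  "hdist A x y = arcosh (sqrt ((bform A x y)\<^sup>2 / (bform A x x * bform A y y)))"

end

theory Submission
  imports Defs "HOL-Analysis.Analysis"
begin


lemma bf_sr_right: "bform A x (simple_root k) = (\<Sum>i\<in>UNIV. x i * real_of_int (A i k))"
  unfolding bform_def simple_root_def by (simp add: if_distrib cong: if_cong)

lemma bf_sr_left: "bform A (simple_root k) y = (\<Sum>j\<in>UNIV. real_of_int (A k j) * y j)"
proof -
  have "bform A (simple_root k) y = (\<Sum>i\<in>UNIV. (if i = k then (\<Sum>j\<in>UNIV. real_of_int (A i j) * y j) else 0))"
    unfolding bform_def simple_root_def by (rule sum.cong) auto
  also have "\<dots> = (\<Sum>j\<in>UNIV. real_of_int (A k j) * y j)" by simp
  finally show ?thesis .
qed

lemma bf_expand_left: "bform A x y = (\<Sum>k\<in>UNIV. x k * bform A (simple_root k) y)"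
  unfolding bf_sr_left unfolding bform_def by (simp add: sum_distrib_left mult.assoc)

lemma bf_expand_right: "bform A x y = (\<Sum>k\<in>UNIV. y k * bform A x (simple_root k))"
  unfolding bf_sr_right unfolding bform_def
  by (subst sum.swap) (simp add: sum_distrib_left sum_distrib_right mult_ac)

lemma bf_lin_left: "bform A (\<lambda>k. a * x k + b * y k) z = a * bform A x z + b * bform A y z"
  unfolding bform_def by (simp add: sum.distrib sum_distrib_left algebra_simps)

lemma bf_lin_right: "bform A z (\<lambda>k. a * x k + b * y k) = a * bform A z x + b * bform A z y"
  unfolding bform_def by (simp add: sum.distrib sum_distrib_left algebra_simps)

lemma bf_sym: assumes "\<And>i j. A i j = A j i" shows "bform A x y = bform A y x"
  unfolding bform_def by (subst sum.swap) (simp add: assms mult_ac)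

lemma bf_sr_sr: "bform A (simple_root k) (simple_root l) = real_of_int (A k l)"
  unfolding bf_sr_left by (simp add: simple_root_def if_distrib cong: if_cong)



definition QS :: "('i \<Rightarrow> 'i \<Rightarrow> int) \<Rightarrow> 'i set \<Rightarrow> ('i \<Rightarrow> real) \<Rightarrow> real" where
  "QS A S v = (\<Sum>k\<in>S. \<Sum>l\<in>S. v k * real_of_int (A k l) * v l)"

lemma kac:
  fixes A :: "'i \<Rightarrow> 'i \<Rightarrow> int"
  assumes sym: "\<And>i j. A i j = A j i" and off: "\<And>i j. i \<noteq> j \<Longrightarrow> A i j \<le> 0"
    and fin: "finite S" and up: "\<And>k. k \<in> S \<Longrightarrow> u k > 0"
    and Au: "\<And>k. k \<in> S \<Longrightarrow> (\<Sum>l\<in>S. real_of_int (A k l) * u l) \<ge> 0"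
  shows "QS A S v \<ge> 0"
proof -
  define t where "t k = v k / u k" for k
  have vt: "v k = u k * t k" if "k \<in> S" for k using up[OF that] unfolding t_def by simp
  define a where "a k l = real_of_int (A k l)" for k l
  define D where "D = (\<Sum>k\<in>S. \<Sum>l\<in>S. a k l * u k * u l * (t k - t l)^2)"
  define F where "F = (\<Sum>k\<in>S. \<Sum>l\<in>S. a k l * u k * u l * (t k)^2)"
  define G where "G = (\<Sum>k\<in>S. \<Sum>l\<in>S. a k l * u k * u l * (t l)^2)"
  define H where "H = (\<Sum>k\<in>S. \<Sum>l\<in>S. a k l * u k * u l * (t k * t l))"
  have D0: "D \<le> 0" unfolding D_def
  proof (intro sum_nonpos)
    fix k l assume "k \<in> S" "l \<in> S"
    show "a k l * u k * u l * (t k - t l)^2 \<le> 0"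
    proof (cases "k = l")
      case True then show ?thesis by simp
    next
      case False
      have "a k l \<le> 0" using off[OF False] unfolding a_def by simp
      moreover have "u k * u l * (t k - t l)^2 \<ge> 0" using up[OF \<open>k\<in>S\<close>] up[OF \<open>l\<in>S\<close>] by simp
      ultimately show ?thesis by (metis mult.assoc mult_nonpos_nonneg)
    qed
  qed
  have F0: "F \<ge> 0"
  proof -
    have "F = (\<Sum>k\<in>S. (t k)^2 * u k * (\<Sum>l\<in>S. a k l * u l))"
      unfolding F_def by (simp add: sum_distrib_left mult_ac)
    also have "\<dots> \<ge> 0"
      using up Au unfolding a_def by (intro sum_nonneg) (simp add: less_imp_le)
    finally show ?thesis .
  qed
  have GF: "G = F"
    unfolding G_def F_def by (subst sum.swap) (simp add: a_def sym mult_ac)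
  have DFH: "D = F + G - 2 * H"
    unfolding D_def F_def G_def H_def
    by (simp add: power2_diff sum.distrib sum_subtractf sum_distrib_left algebra_simps)
  have QH: "QS A S v = H"
    unfolding QS_def H_def a_def
    by (intro sum.cong refl) (simp add: vt mult_ac)
  show ?thesis using D0 F0 GF DFH QH by linarith
qed



lemma sl_facts:
  assumes "simply_laced A"
  shows "A i i = 2" "A i j = A j i" "i \<noteq> j \<Longrightarrow> A i j \<le> 0" "i \<noteq> j \<Longrightarrow> A i j = 0 \<or> A i j = -1"
  using assms unfolding simply_laced_def by (auto, force)

lemma QS_split:
  assumes "S = S1 \<union> S2" "S1 \<inter> S2 = {}" "finite S"
    and cross: "\<And>k l. k \<in> S1 \<Longrightarrow> l \<in> S2 \<Longrightarrow> A k l = 0 \<and> A l k = 0"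
  shows "QS A S v = QS A S1 v + QS A S2 v"
proof -
  have f1: "finite S1" "finite S2" using assms by auto
  have "QS A S v = (\<Sum>k\<in>S1. \<Sum>l\<in>S. v k * real_of_int (A k l) * v l) + (\<Sum>k\<in>S2. \<Sum>l\<in>S. v k * real_of_int (A k l) * v l)"
    unfolding QS_def using assms f1 by (simp add: sum.union_disjoint)
  also have "(\<Sum>k\<in>S1. \<Sum>l\<in>S. v k * real_of_int (A k l) * v l) = (\<Sum>k\<in>S1. \<Sum>l\<in>S1. v k * real_of_int (A k l) * v l)"
  proof (rule sum.cong[OF refl])
    fix k assume k: "k \<in> S1"
    have "(\<Sum>l\<in>S. v k * real_of_int (A k l) * v l) = (\<Sum>l\<in>S1. v k * real_of_int (A k l) * v l) + (\<Sum>l\<in>S2. v k * real_of_int (A k l) * v l)"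
      using assms f1 by (simp add: sum.union_disjoint)
    also have "(\<Sum>l\<in>S2. v k * real_of_int (A k l) * v l) = 0"
      using cross[OF k] by (intro sum.neutral) auto
    finally show "(\<Sum>l\<in>S. v k * real_of_int (A k l) * v l) = (\<Sum>l\<in>S1. v k * real_of_int (A k l) * v l)" by simp
  qed
  also have "(\<Sum>k\<in>S2. \<Sum>l\<in>S. v k * real_of_int (A k l) * v l) = (\<Sum>k\<in>S2. \<Sum>l\<in>S2. v k * real_of_int (A k l) * v l)"
  proof (rule sum.cong[OF refl])
    fix k assume k: "k \<in> S2"
    have "(\<Sum>l\<in>S. v k * real_of_int (A k l) * v l) = (\<Sum>l\<in>S1. v k * real_of_int (A k l) * v l) + (\<Sum>l\<in>S2. v k * real_of_int (A k l) * v l)"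
      using assms f1 by (simp add: sum.union_disjoint)
    also have "(\<Sum>l\<in>S1. v k * real_of_int (A k l) * v l) = 0"
      using cross k by (intro sum.neutral) auto
    finally show "(\<Sum>l\<in>S. v k * real_of_int (A k l) * v l) = (\<Sum>l\<in>S2. v k * real_of_int (A k l) * v l)" by simp
  qed
  finally show ?thesis unfolding QS_def .
qed

lemma psd_proper:
  fixes A :: "'i::finite \<Rightarrow> 'i \<Rightarrow> int"
  assumes sl: "simply_laced A" and hyp: "hyperbolic A"
  shows "S \<noteq> UNIV \<Longrightarrow> QS A S v \<ge> 0"
proof (induction "card S" arbitrary: S rule: less_induct)
  case less
  note sym = sl_facts(2)[OF sl] and off = sl_facts(3)[OF sl]
  show ?case
  proof (cases "connected_sub A S")
    case True
    then have "finite_type A S \<or> affine_type A S" using hyp less.prems unfolding hyperbolic_def by auto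
    then obtain u :: "'i \<Rightarrow> real" where u: "\<And>k. k \<in> S \<Longrightarrow> u k > 0"
      and Au: "\<And>k. k \<in> S \<Longrightarrow> (\<Sum>l\<in>S. real_of_int (A k l) * u l) \<ge> 0"
      unfolding finite_type_def affine_type_def by (metis less_imp_le order_refl)
    show ?thesis by (rule kac[OF sym off finite u Au]) auto
  next
    case False
    show ?thesis
    proof (cases "S = {}")
      case True then show ?thesis by (simp add: QS_def)
    next
      case ne: False
      define R where "R = {(k, l). k \<in> S \<and> l \<in> S \<and> dynkin_edge A k l}"
      from False ne obtain i0 j0 where ij: "i0 \<in> S" "j0 \<in> S" "(i0, j0) \<notin> R\<^sup>*"
        unfolding connected_sub_def R_def by auto
      define S1 where "S1 = {m \<in> S. (i0, m) \<in> R\<^sup>*}"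
      define S2 where "S2 = S - S1"
      have cross: "A k l = 0 \<and> A l k = 0" if "k \<in> S1" "l \<in> S2" for k l
      proof -
        have "A k l = 0"
        proof (rule ccontr)
          assume "A k l \<noteq> 0"
          moreover have "k \<noteq> l" using that unfolding S2_def by auto
          ultimately have "(k, l) \<in> R" using that unfolding R_def S1_def S2_def dynkin_edge_def by auto
          then have "(i0, l) \<in> R\<^sup>*" using that unfolding S1_def by auto
          then show False using that unfolding S1_def S2_def by auto
        qed
        then show ?thesis using sym[of k l] by simp
      qed
      have split: "QS A S v = QS A S1 v + QS A S2 v"
        by (rule QS_split[OF _ _ _ cross]) (auto simp: S1_def S2_def)
      have c1: "card S1 < card S"
        by (rule psubset_card_mono) (use ij in \<open>auto simp: S1_def\<close>)
      have c2: "card S2 < card S"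
        by (rule psubset_card_mono) (use ij in \<open>auto simp: S1_def S2_def\<close>)
      have n1: "S1 \<noteq> UNIV" "S2 \<noteq> UNIV" using less.prems by (auto simp: S1_def S2_def)
      show ?thesis using split less.hyps[OF c1 n1(1)] less.hyps[OF c2 n1(2)] by simp
    qed
  qed
qed

lemma psd_hyperplane:
  fixes A :: "'i::finite \<Rightarrow> 'i \<Rightarrow> int"
  assumes sl: "simply_laced A" and hyp: "hyperbolic A" and vr: "v r = 0"
  shows "bform A v v \<ge> 0"
proof -
  have "bform A v v = QS A (UNIV - {r}) v"
    unfolding bform_def QS_def
  proof -
    have "(\<Sum>i\<in>UNIV. \<Sum>j\<in>UNIV. v i * real_of_int (A i j) * v j) = (\<Sum>i\<in>UNIV-{r}. \<Sum>j\<in>UNIV. v i * real_of_int (A i j) * v j)"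
      by (rule sum.mono_neutral_right) (auto simp: vr)
    also have "\<dots> = (\<Sum>i\<in>UNIV-{r}. \<Sum>j\<in>UNIV-{r}. v i * real_of_int (A i j) * v j)"
      by (intro sum.cong refl sum.mono_neutral_right) (auto simp: vr)
    finally show "(\<Sum>i\<in>UNIV. \<Sum>j\<in>UNIV. v i * real_of_int (A i j) * v j) = (\<Sum>i\<in>UNIV-{r}. \<Sum>j\<in>UNIV-{r}. v i * real_of_int (A i j) * v j)" .
  qed
  also have "\<dots> \<ge> 0" by (rule psd_proper[OF sl hyp]) auto
  finally show ?thesis .
qed



lemma sum_nonpos_zero:
  fixes f :: "'a \<Rightarrow> real"
  assumes "finite S" "\<And>x. x \<in> S \<Longrightarrow> f x \<le> 0" "sum f S = 0" "y \<in> S"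
  shows "f y = 0"
proof -
  have "sum (\<lambda>x. - f x) S = 0" using assms(3) by (simp add: sum_negf)
  then have "\<forall>x\<in>S. - f x = 0" using sum_nonneg_eq_0_iff[OF assms(1), of "\<lambda>x. - f x"] assms(2) by auto
  then show ?thesis using assms(4) by auto
qed

lemma bf_quad:
  fixes A :: "'i::finite \<Rightarrow> 'i \<Rightarrow> int"
  assumes sym: "\<And>i j. A i j = A j i"
  shows "bform A (\<lambda>m. s * p m + t * q m) (\<lambda>m. s * p m + t * q m)
     = s^2 * bform A p p + 2 * s * t * bform A p q + t^2 * bform A q q"
  unfolding bf_lin_left bf_lin_right using bf_sym[OF sym, where x=p and y=q]
  by (simp add: algebra_simps power2_eq_square)

lemma radical_zero:
  fixes A :: "'i::finite \<Rightarrow> 'i \<Rightarrow> int"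
  assumes sl: "simply_laced A" and hyp: "hyperbolic A" and pp: "bform A p p < 0"
    and rad: "\<And>k. bform A x (simple_root k) = 0"
  shows "x k = 0"
proof (rule ccontr)
  assume xk: "x k \<noteq> 0"
  note sym = sl_facts(2)[OF sl]
  define c where "c = p k / x k"
  have x0: "bform A x y = 0" for y
    unfolding bf_expand_right[of A x y] using rad by simp
  have "bform A (\<lambda>m. 1 * p m + (-c) * x m) (\<lambda>m. 1 * p m + (-c) * x m) = bform A p p"
    unfolding bf_quad[OF sym] using x0 bf_sym[OF sym, where x=p and y=x] by simp
  moreover have "bform A (\<lambda>m. 1 * p m + (-c) * x m) (\<lambda>m. 1 * p m + (-c) * x m) \<ge> 0"
    by (rule psd_hyperplane[OF sl hyp, of _ k]) (use xk in \<open>simp add: c_def\<close>)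
  ultimately show False using pp by simp
qed

lemma reverse_cs:
  fixes A :: "'i::finite \<Rightarrow> 'i \<Rightarrow> int"
  assumes sl: "simply_laced A" and hyp: "hyperbolic A" and pp: "bform A p p < 0"
  shows "bform A p p * bform A q q \<le> (bform A p q)^2"
proof (rule ccontr)
  assume neg: "\<not> ?thesis"
  note sym = sl_facts(2)[OF sl]
  obtain k where pk: "p k \<noteq> 0"
  proof -
    have "\<not> (\<forall>k. p k = 0)"
    proof
      assume "\<forall>k. p k = 0"
      then have "p = (\<lambda>_. 0)" by auto
      then show False using pp by (simp add: bform_def)
    qed
    then show ?thesis using that by auto
  qed
  define s where "s = q k" 
  define t where "t = - p k"
  define P where "P = bform A p p"
  define M where "M = bform A p q"
  define Q where "Q = bform A q q"
  have "bform A (\<lambda>m. s * p m + t * q m) (\<lambda>m. s * p m + t * q m) \<ge> 0"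
    by (rule psd_hyperplane[OF sl hyp, of _ k]) (simp add: s_def t_def)
  then have f: "s^2 * P + 2 * s * t * M + t^2 * Q \<ge> 0"
    unfolding bf_quad[OF sym] P_def M_def Q_def .
  have id: "P * (s^2 * P + 2 * s * t * M + t^2 * Q) = (s * P + t * M)^2 + t^2 * (P * Q - M^2)"
    by (simp add: algebra_simps power2_eq_square)
  have "t^2 > 0" using pk by (simp add: t_def)
  moreover have "P * Q - M^2 > 0" using neg by (simp add: P_def Q_def M_def)
  ultimately have "P * (s^2 * P + 2 * s * t * M + t^2 * Q) > 0"
    unfolding id by (simp add: add_nonneg_pos)
  moreover have "P < 0" using pp by (simp add: P_def)
  ultimately show False using f by (simp add: zero_less_mult_iff)
qed

lemma radical_hyperplane:
  fixes A :: "'i::finite \<Rightarrow> 'i \<Rightarrow> int"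
  assumes sl: "simply_laced A" and hyp: "hyperbolic A"
    and xr: "x r = 0" and xx: "bform A x x = 0" and hr: "h r = 0"
  shows "bform A x h = 0"
proof -
  note sym = sl_facts(2)[OF sl]
  define c where "c = bform A x h"
  define d where "d = bform A h h"
  have d0: "d \<ge> 0" unfolding d_def by (rule psd_hyperplane[OF sl hyp, where v=h and r=r]) (rule hr)
  define \<tau> where "\<tau> = - c / (d + 1)"
  have "bform A (\<lambda>m. 1 * x m + \<tau> * h m) (\<lambda>m. 1 * x m + \<tau> * h m) \<ge> 0"
    by (rule psd_hyperplane[OF sl hyp, of _ r]) (simp add: xr hr)
  then have "2 * \<tau> * c + \<tau>^2 * d \<ge> 0"
    unfolding bf_quad[OF sym] xx c_def d_def by simp
  moreover have "(2 * \<tau> * c + \<tau>^2 * d) * (d+1)^2 = - (c^2) * (d + 2)"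
  proof -
    have e: "\<tau> * (d+1) = - c" using d0 unfolding \<tau>_def by simp
    have "(2 * \<tau> * c + \<tau>^2 * d) * (d+1)^2 = 2*c*(d+1)*(\<tau>*(d+1)) + d*(\<tau>*(d+1))^2"
      by (simp add: algebra_simps power2_eq_square)
    also have "\<dots> = - (c^2) * (d + 2)" unfolding e by (simp add: algebra_simps power2_eq_square)
    finally show ?thesis .
  qed
  ultimately have "- (c^2) * (d + 2) \<ge> 0" by (metis zero_le_power2 mult_nonneg_nonneg)
  then have "c^2 * (d + 2) \<le> 0" by simp
  then have "c^2 \<le> 0" using d0 by (simp add: mult_le_0_iff)
  then show ?thesis unfolding c_def by simp
qed



lemma chamber_nonneg:
  fixes A :: "'i::finite \<Rightarrow> 'i \<Rightarrow> int"
  assumes sl: "simply_laced A" and hyp: "hyperbolic A" and pp: "bform A p p < 0"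
    and xC: "x \<in> chamber A"
  shows "x k \<ge> 0"
proof (rule ccontr)
  assume "\<not> x k \<ge> 0"
  then have xr: "x k < 0" by simp
  define r where "r = k"
  note sym = sl_facts(2)[OF sl] and off = sl_facts(3)[OF sl]
  have xa: "bform A x (simple_root m) \<le> 0" for m using xC unfolding chamber_def by auto
  define xp where "xp m = max (x m) 0" for m
  define xm where "xm m = max (- x m) 0" for m
  have xpm: "xp = (\<lambda>m. 1 * x m + 1 * xm m)" by (auto simp: xp_def xm_def fun_eq_iff)
  have h1: "bform A xp x \<le> 0"
    unfolding bf_expand_left[of A xp x]
    by (intro sum_nonpos) (simp add: bf_sym[OF sym, where x="simple_root _" and y=x] xa xp_def mult_nonneg_nonpos)
  have h2: "bform A xp xm \<le> 0"
    unfolding bform_def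
  proof (intro sum_nonpos)
    fix i j
    show "xp i * real_of_int (A i j) * xm j \<le> 0"
    proof (cases "i = j")
      case True then show ?thesis by (simp add: xp_def xm_def)
    next
      case False
      then have "real_of_int (A i j) \<le> 0" using off by simp
      moreover have "xp i \<ge> 0" "xm j \<ge> 0" by (auto simp: xp_def xm_def)
      ultimately show ?thesis by (simp add: mult_nonneg_nonpos mult_nonpos_nonneg)
    qed
  qed
  have h3: "bform A xp xp = bform A xp x + bform A xp xm"
    using bf_lin_right[of A xp 1 x 1 xm] xpm by simp
  have xpr: "xp r = 0" using xr by (simp add: xp_def r_def)
  have "bform A xp xp \<ge> 0" by (rule psd_hyperplane[OF sl hyp, where v=xp and r=r]) (rule xpr)
  then have z: "bform A xp xp = 0" "bform A xp x = 0" "bform A xp xm = 0" using h1 h2 h3 by linarith+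
  have am: "bform A xp (simple_root m) = 0" if "m \<noteq> r" for m
    by (rule radical_hyperplane[OF sl hyp xpr z(1)]) (use that in \<open>simp add: simple_root_def\<close>)
  have nonpos_l: "bform A xp (simple_root l) \<le> 0" if "xp l = 0" for l
    unfolding bf_sr_right
  proof (intro sum_nonpos)
    fix i show "xp i * real_of_int (A i l) \<le> 0"
    proof (cases "i = l")
      case True then show ?thesis using that by simp
    next
      case False
      then have "real_of_int (A i l) \<le> 0" using off by simp
      moreover have "xp i \<ge> 0" by (auto simp: xp_def)
      ultimately show ?thesis by (simp add: mult_nonneg_nonpos)
    qed
  qed
  have terms: "xm l * bform A xp (simple_root l) \<le> 0" for l
  proof (cases "xm l = 0")
    case True then show ?thesis by simp
  next
    case False
    then have "x l < 0" by (auto simp: xm_def)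
    then have "xp l = 0" by (simp add: xp_def)
    moreover have "xm l \<ge> 0" by (simp add: xm_def)
    ultimately show ?thesis using nonpos_l by (simp add: mult_nonneg_nonpos)
  qed
  have sz: "(\<Sum>l\<in>UNIV. xm l * bform A xp (simple_root l)) = 0"
    using z(3) unfolding bf_expand_right[of A xp xm] .
  have "xm r * bform A xp (simple_root r) = 0"
    by (rule sum_nonpos_zero[where S=UNIV and f="\<lambda>l. xm l * bform A xp (simple_root l)" and y=r]) (simp_all add: terms sz)
  moreover have "xm r > 0" using xr by (simp add: xm_def r_def)
  ultimately have "bform A xp (simple_root r) = 0" by simp
  then have allz: "bform A xp (simple_root m) = 0" for m using am by (cases "m = r") auto
  have xp0: "xp m = 0" for m by (rule radical_zero[OF sl hyp pp allz])
  define u where "u m = - x m" for m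
  have u0: "u m \<ge> 0" for m using xp0[of m] by (simp add: u_def xp_def max_def split: if_splits)
  have ur: "u r > 0" using xr by (simp add: u_def r_def)
  have Au: "(\<Sum>l\<in>UNIV. real_of_int (A m l) * u l) \<ge> 0" for m
  proof -
    have "(\<Sum>l\<in>UNIV. real_of_int (A m l) * u l) = - bform A x (simple_root m)"
      unfolding bf_sr_right u_def by (simp add: sum_negf sym[of m] mult_ac)
    then show ?thesis using xa[of m] by simp
  qed
  have closed: "u l = 0" if "u k' = 0" "dynkin_edge A k' l" for k' l
  proof -
    have tn: "real_of_int (A k' i) * u i \<le> 0" if "i \<noteq> k'" for i
      using off[OF that[symmetric]] u0[of i] by (simp add: mult_nonpos_nonneg)
    have tn2: "real_of_int (A k' i) * u i \<le> 0" for i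
      using tn[of i] \<open>u k' = 0\<close> by (cases "i = k'") auto
    have sz: "(\<Sum>i\<in>UNIV. real_of_int (A k' i) * u i) = 0"
    proof (rule antisym)
      show "(\<Sum>i\<in>UNIV. real_of_int (A k' i) * u i) \<le> 0"
        by (rule sum_nonpos) (rule tn2)
    qed (rule Au)
    have "real_of_int (A k' l) * u l = 0"
      by (rule sum_nonpos_zero[where S=UNIV and f="\<lambda>i. real_of_int (A k' i) * u i" and y=l]) (simp_all add: tn2 sz)
    moreover have "A k' l \<noteq> 0" using that(2) unfolding dynkin_edge_def by simp
    ultimately show ?thesis by simp
  qed
  have upos: "u m > 0" for m
  proof (rule ccontr)
    assume "\<not> u m > 0"
    then have um: "u m = 0" using u0[of m] by simp
    have conn: "(m, r) \<in> {(k, l). k \<in> UNIV \<and> l \<in> UNIV \<and> dynkin_edge A k l}\<^sup>*"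
      using hyp unfolding hyperbolic_def connected_sub_def by auto
    have "u r = 0" using conn
    proof (induction rule: rtrancl_induct)
      case base then show ?case by (rule um)
    next
      case (step b c) then show ?case using closed by auto
    qed
    then show False using ur by simp
  qed
  have "QS A UNIV p \<ge> 0"
    by (rule kac[OF sym off finite upos Au])
  moreover have "QS A UNIV p = bform A p p" unfolding QS_def bform_def by simp
  ultimately show False using pp by simp
qed

lemma chamber_prod:
  fixes A :: "'i::finite \<Rightarrow> 'i \<Rightarrow> int"
  assumes sl: "simply_laced A" and hyp: "hyperbolic A" and pp: "bform A p p < 0"
    and xC: "x \<in> chamber A" and yC: "y \<in> chamber A"
  shows "bform A x y \<le> 0"
proof -
  note sym = sl_facts(2)[OF sl]
  show ?thesis unfolding bf_expand_left[of A x y]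
  proof (intro sum_nonpos)
    fix k
    have "x k \<ge> 0" by (rule chamber_nonneg[OF sl hyp pp xC])
    moreover have "bform A (simple_root k) y \<le> 0"
      using yC bf_sym[OF sym, where x="simple_root k" and y=y] unfolding chamber_def by auto
    ultimately show "x k * bform A (simple_root k) y \<le> 0" by (simp add: mult_nonneg_nonpos)
  qed
qed



lemma dual_vector:
  fixes A :: "'i::finite \<Rightarrow> 'i \<Rightarrow> int"
  assumes sl: "simply_laced A" and hyp: "hyperbolic A" and pp: "bform A p p < 0"
  shows "\<exists>w. \<forall>k. bform A w (simple_root k) = (if k = i then 1 else 0)"
proof -
  note sym = sl_facts(2)[OF sl]
  define L :: "real^'i \<Rightarrow> real^'i" where "L v = (\<chi> k. \<Sum>l\<in>UNIV. real_of_int (A k l) * v$l)" for v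
  have lin: "linear L"
  proof (rule linearI)
    fix b1 b2 :: "real^'i"
    show "L (b1 + b2) = L b1 + L b2"
      unfolding L_def vec_eq_iff by (simp add: sum.distrib distrib_left)
  next
    fix r :: real and b :: "real^'i"
    show "L (r *\<^sub>R b) = r *\<^sub>R L b"
      unfolding L_def vec_eq_iff by (simp add: sum_distrib_left mult.left_commute)
  qed
  have bfL: "bform A (\<lambda>k. v$k) (simple_root m) = L v $ m" for v m
    unfolding bf_sr_right L_def by (simp, intro sum.cong refl) (metis sym mult.commute)
  have inj: "inj L"
    unfolding linear_injective_0[OF lin]
  proof (intro allI impI)
    fix v assume "L v = 0"
    then have r: "bform A (\<lambda>k. v$k) (simple_root m) = 0" for m by (simp add: bfL)
    have "(\<lambda>k. v$k) m = 0" for m by (rule radical_zero[OF sl hyp pp r])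
    then show "v = 0" by (simp add: vec_eq_iff)
  qed
  have "surj L" using linear_injective_imp_surjective[OF lin inj] by auto
  then obtain v where "L v = (\<chi> k. if k = i then 1 else 0)" by (metis surjE)
  then show ?thesis by (intro exI[of _ "\<lambda>k. v$k"] allI) (simp add: bfL)
qed



lemma arcosh_mono_le:
  fixes x y :: real
  assumes "1 \<le> x" "x \<le> y"
  shows "arcosh x \<le> arcosh y"
  using arcosh_less_iff_real[of y x] assms by linarith

lemma hdist_nonneg:
  fixes A :: "'i::finite \<Rightarrow> 'i \<Rightarrow> int"
  assumes sl: "simply_laced A" and hyp: "hyperbolic A" and pp: "bform A p p < 0" and qq: "bform A q q < 0"
  shows "hdist A p q \<ge> 0"
proof -
  have cs: "bform A p p * bform A q q \<le> (bform A p q)^2" by (rule reverse_cs[OF sl hyp pp])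
  have pos: "bform A p p * bform A q q > 0" using pp qq by (simp add: mult_neg_neg)
  have "1 \<le> (bform A p q)^2 / (bform A p p * bform A q q)"
    using cs pos by (simp add: le_divide_eq)
  then have "1 \<le> sqrt ((bform A p q)^2 / (bform A p p * bform A q q))" by simp
  then show ?thesis unfolding hdist_def by simp
qed

theorem lemma2p2:
  fixes A :: "'i::finite \<Rightarrow> 'i \<Rightarrow> int" and i :: 'i and p :: "'i \<Rightarrow> real"
  assumes "simply_laced A" and "hyperbolic A"
    and "p \<in> facet_pts A i"
  shows "\<exists>j. j \<noteq> i \<and> A i j = -1 \<and>
           facet_pts A i \<inter> facet_pts A j \<noteq> {} \<and>
           Inf (hdist A p ` (facet_pts A i \<inter> facet_pts A j)) \<le> arcosh (sqrt (4/3))"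
proof -
  note sl = assms(1) and hyp = assms(2)
  note sym = sl_facts(2)[OF sl] and off = sl_facts(3)[OF sl] and diag = sl_facts(1)[OF sl]
  note o01 = sl_facts(4)[OF sl]
  have pC: "p \<in> chamber A" and pp: "bform A p p < 0" and pi: "bform A p (simple_root i) = 0"
    using assms(3) unfolding facet_pts_def by auto
  have pa: "bform A p (simple_root k) \<le> 0" for k using pC unfolding chamber_def by auto
  define P where "P = bform A p p"
  define y where "y k = - bform A p (simple_root k)" for k
  define N where "N = {j. j \<noteq> i \<and> A i j = -1}"
  have Nne: "N \<noteq> {}"
  proof
    assume N0: "N = {}"
    show False
    proof (cases "\<exists>k. k \<noteq> i")
      case True
      then obtain k where k: "k \<noteq> i" by auto
      have "(i, k) \<in> {(k, l). k \<in> UNIV \<and> l \<in> UNIV \<and> dynkin_edge A k l}\<^sup>*"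
        using hyp unfolding hyperbolic_def connected_sub_def by auto
      then obtain c where "dynkin_edge A i c"
        using k by (auto elim: converse_rtranclE)
      then have "c \<in> N" using o01[of i c] unfolding dynkin_edge_def N_def by auto
      then show False using N0 by simp
    next
      case False
      then have all: "k = i" for k by auto
      have U: "UNIV = {i}" using all by blast
      have "bform A p (simple_root i) = p i * 2"
        unfolding bf_sr_right U using diag[of i] by simp
      then have "p i = 0" using pi by simp
      then have "p = (\<lambda>_. 0)" using all by (intro ext) metis
      then show False using pp by (simp add: bform_def)
    qed
  qed
  define m where "m = Min (y ` N)"
  have finN: "finite N" by simp
  have "m \<in> y ` N" unfolding m_def using finN Nne by (intro Min_in) auto
  then obtain j where jN: "j \<in> N" and yj: "y j = m" by auto
  have mle: "m \<le> y k" if "k \<in> N" for k using that finN unfolding m_def by simp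
  have m0: "m \<ge> 0" using pa[of j] yj unfolding y_def by simp
  have ji: "j \<noteq> i" and aij: "A i j = -1" using jN unfolding N_def by auto
  have aji: "A j i = -1" using aij sym[of i j] by simp
  obtain \<omega> where om: "\<And>k. bform A \<omega> (simple_root k) = (if k = i then 1 else 0)"
    using dual_vector[OF sl hyp pp, of i] by auto
  define \<omega>' where "\<omega>' k = (-1) * \<omega> k + 0 * \<omega> k" for k
  have om': "bform A \<omega>' (simple_root k) = (if k = i then -1 else 0)" for k
    unfolding \<omega>'_def[abs_def] bf_lin_left om by simp
  have om'C: "\<omega>' \<in> chamber A" unfolding chamber_def using om' by simp
  have om'2: "bform A \<omega>' \<omega>' \<le> 0" by (rule chamber_prod[OF sl hyp pp om'C om'C])
  define b where "b k = 1 * simple_root i k + 2 * \<omega>' k" for k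
  have bsr: "bform A b (simple_root k) = real_of_int (A i k) + (if k = i then -2 else 0)" for k
    unfolding b_def[abs_def] bf_lin_left bf_sr_sr om' by simp
  have bC: "b \<in> chamber A"
    unfolding chamber_def using bsr off diag by (auto simp: split: if_splits)
  have bb: "bform A b b \<le> -2"
  proof -
    have "bform A b b = 1^2 * bform A (simple_root i) (simple_root i) + 2 * 1 * 2 * bform A (simple_root i) \<omega>' + 2^2 * bform A \<omega>' \<omega>'"
      unfolding b_def[abs_def] by (rule bf_quad[OF sym])
    also have "bform A (simple_root i) \<omega>' = -1"
      using bf_sym[OF sym, where x="simple_root i" and y=\<omega>'] om'[of i] by simp
    finally show ?thesis using om'2 by (simp add: bf_sr_sr diag)
  qed
  define a where "a k = 1 * p k + (- m) * b k" for k
  have aC: "a \<in> chamber A"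
    unfolding chamber_def
  proof (intro CollectI allI)
    fix k
    have e: "bform A a (simple_root k) = bform A p (simple_root k) - m * bform A b (simple_root k)"
      unfolding a_def[abs_def] bf_lin_left by simp
    show "bform A a (simple_root k) \<le> 0"
    proof (cases "k = i")
      case True then show ?thesis using e pi bsr diag by simp
    next
      case False
      show ?thesis
      proof (cases "k \<in> N")
        case True
        then have "A i k = -1" unfolding N_def by simp
        then show ?thesis using e bsr False mle[OF True] unfolding y_def by simp
      next
        case kN: False
        then have "A i k = 0" using o01[of i k] False unfolding N_def by auto
        then show ?thesis using e bsr False pa[of k] by simp
      qed
    qed
  qed
  have aa: "bform A a a \<le> 0" by (rule chamber_prod[OF sl hyp pp aC aC])
  have ab: "bform A a b \<le> 0" by (rule chamber_prod[OF sl hyp pp aC bC])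
  have pab: "p = (\<lambda>k. 1 * a k + m * b k)" by (simp add: a_def fun_eq_iff)
  have key: "2 * m^2 \<le> - P"
  proof -
    have "P = 1^2 * bform A a a + 2 * 1 * m * bform A a b + m^2 * bform A b b"
      unfolding P_def by (subst (1 2) pab) (rule bf_quad[OF sym])
    moreover have "m * bform A a b \<le> 0" using m0 ab by (simp add: mult_nonneg_nonpos)
    moreover have "m^2 * bform A b b \<le> m^2 * (-2)" using mult_left_mono[OF bb, of "m^2"] by simp
    ultimately show ?thesis using aa by simp
  qed
  define r where "r k = 1 * simple_root j k + (1/2) * simple_root i k" for k
  define t where "t = 2 * m / 3"
  define q where "q k = 1 * p k + t * r k" for k
  have rsr: "bform A r (simple_root k) = real_of_int (A j k) + real_of_int (A i k) / 2" for k
    unfolding r_def[abs_def] bf_lin_left bf_sr_sr by simp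
  have qsr: "bform A q (simple_root k) = bform A p (simple_root k) + t * (real_of_int (A j k) + real_of_int (A i k) / 2)" for k
    unfolding q_def[abs_def] bf_lin_left rsr by simp
  have t0: "t \<ge> 0" using m0 by (simp add: t_def)
  have pj: "bform A p (simple_root j) = - m" using yj unfolding y_def by simp
  have qi: "bform A q (simple_root i) = 0" using qsr[of i] pi aji diag by simp
  have qj: "bform A q (simple_root j) = 0" using qsr[of j] pj aij diag by (simp add: t_def)
  have qC: "q \<in> chamber A"
    unfolding chamber_def
  proof (intro CollectI allI)
    fix k
    show "bform A q (simple_root k) \<le> 0"
    proof (cases "k = i \<or> k = j")
      case True then show ?thesis using qi qj by auto
    next
      case False
      then have "real_of_int (A j k) \<le> 0" "real_of_int (A i k) \<le> 0" using off by auto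
      then have "t * (real_of_int (A j k) + real_of_int (A i k) / 2) \<le> 0"
        using t0 by (simp add: mult_nonneg_nonpos)
      then show ?thesis using qsr[of k] pa[of k] by simp
    qed
  qed
  have pr: "bform A p r = - m"
    unfolding r_def[abs_def] bf_lin_right pj pi by simp
  have rr: "bform A r r = 3/2"
  proof -
    have "bform A r r = 1^2 * bform A (simple_root j) (simple_root j) + 2 * 1 * (1/2) * bform A (simple_root j) (simple_root i) + (1/2)^2 * bform A (simple_root i) (simple_root i)"
      unfolding r_def[abs_def] by (rule bf_quad[OF sym])
    then show ?thesis by (simp add: bf_sr_sr diag aji power2_eq_square)
  qed
  have pq: "bform A p q = P - 2/3 * m^2"
    unfolding q_def[abs_def] bf_lin_right pr P_def by (simp add: t_def power2_eq_square)
  have qq: "bform A q q = P - 2/3 * m^2"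
  proof -
    have "bform A q q = 1^2 * P + 2 * 1 * t * bform A p r + t^2 * bform A r r"
      unfolding q_def[abs_def] P_def by (rule bf_quad[OF sym])
    then show ?thesis unfolding pr rr t_def by (simp add: power2_eq_square field_simps)
  qed
  have Pneg: "P < 0" using pp by (simp add: P_def)
  have qneg: "bform A q q < 0" using qq Pneg zero_le_power2[of m] by linarith
  have qF: "q \<in> facet_pts A i \<inter> facet_pts A j"
    unfolding facet_pts_def using qC qneg qi qj by auto
  have hq: "hdist A p q \<le> arcosh (sqrt (4/3))"
  proof -
    define Q where "Q = P - 2/3 * m^2"
    have Qn: "Q < 0" using qneg qq by (simp add: Q_def)
    have ratio: "(bform A p q)^2 / (bform A p p * bform A q q) = Q / P"
      using Qn Pneg unfolding pq qq P_def[symmetric] Q_def[symmetric]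
      by (simp add: power2_eq_square)
    have r1: "Q / P \<ge> 1" using Qn Pneg by (simp add: le_divide_eq Q_def)
    have r2: "Q / P \<le> 4/3" using Pneg key by (simp add: divide_le_eq Q_def)
    have "sqrt (Q/P) \<le> sqrt (4/3)" using r2 by simp
    moreover have "1 \<le> sqrt (Q/P)" using r1 by simp
    ultimately show ?thesis unfolding hdist_def ratio by (rule arcosh_mono_le[rotated])
  qed
  have bdd: "bdd_below (hdist A p ` (facet_pts A i \<inter> facet_pts A j))"
  proof (rule bdd_belowI[of _ 0])
    fix z assume "z \<in> hdist A p ` (facet_pts A i \<inter> facet_pts A j)"
    then obtain q' where "q' \<in> facet_pts A i \<inter> facet_pts A j" and z: "z = hdist A p q'" by auto
    then have "bform A q' q' < 0" unfolding facet_pts_def by auto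
    then show "0 \<le> z" unfolding z by (rule hdist_nonneg[OF sl hyp pp])
  qed
  have "Inf (hdist A p ` (facet_pts A i \<inter> facet_pts A j)) \<le> hdist A p q"
    by (rule cInf_lower[OF imageI[OF qF] bdd])
  then show ?thesis using ji aij qF hq by (intro exI[of _ j]) auto
qed

end
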